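(* Let $P=\sum_{S\in\mathbb{S}_P}S\subset\mathbb{E}^3$ be a three-dimensional zonotope with generator set $\mathbb{S}_P$ consisting of pairwise non-parallel segments centered at the origin, let $S_0\in\mathbb{S}_P$, and let $\vec S_0$ be the vector from one endpoint of $S_0$ to the other. Let $P^*=\sum_{S\in\mathbb{S}_P\setminus\{S_0\}}S$. Then $$P\cap(P+\vec S_0)=P^*+\tfrac12\vec S_0.$$
   Context: A zonotope is a Minkowski sum of finitely many segments; its generator set is such a family of segments. *)

theory Defs
  imports "HOL-Analysis.Analysis" "HOL-Library.Set_Algebras"
begin

definition centered_segment :: "'a::real_vector set \<Rightarrow> bool" where
  "centered_segment S \<longleftrightarrow> (\<exists>a. a \<noteq> 0 \<and> S = closed_segment (- a) a)"

definition parallel_segments :: "'a::real_vector set \<Rightarrow> 'a set \<Rightarrow> bool" where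
  "parallel_segments S T \<longleftrightarrow>
     (\<exists>a b c d. S = closed_segment a b \<and> T = closed_segment c d \<and> a \<noteq> b \<and> c \<noteq> d
        \<and> (\<exists>t. b - a = t *\<^sub>R (d - c)))"

definition minkowski_sum :: "'a::comm_monoid_add set set \<Rightarrow> 'a set" where
  "minkowski_sum SS = (\<Sum>S\<in>SS. S)"

end

theory Submission
  imports Defs
begin

lemma key:
  fixes Q :: "'a::real_vector set" and p q :: 'a
  assumes cQ: "convex Q" and pq: "p = - q"
  shows "(closed_segment p q + Q) \<inter> (\<lambda>x. x + (q - p)) ` (closed_segment p q + Q)
           = (\<lambda>x. x + (1/2) *\<^sub>R (q - p)) ` Q"
proof
  define d where "d = q - p"
  have pd: "p = - (1/2) *\<^sub>R d" and qd: "q = (1/2) *\<^sub>R d"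
    using pq unfolding d_def by (auto simp: algebra_simps scaleR_2[symmetric])
  have seg: "u \<in> closed_segment p q \<longleftrightarrow> (\<exists>l. 0 \<le> l \<and> l \<le> 1 \<and> u = (l - 1/2) *\<^sub>R d)" for u
  proof -
    have eq: "(1 - t) *\<^sub>R p + t *\<^sub>R q = (t - 1/2) *\<^sub>R d" for t :: real
    proof -
      have "(1 - t) *\<^sub>R p + t *\<^sub>R q = ((1 - t) * (- 1/2) + t * (1/2)) *\<^sub>R d"
        unfolding pd qd by (simp add: scaleR_add_left scaleR_diff_left)
      also have "(1 - t) * (- 1/2) + t * (1/2) = t - 1/2" by (simp add: field_simps)
      finally show ?thesis .
    qed
    show ?thesis unfolding in_segment eq by auto
  qed
  show "(\<lambda>x. x + (1/2) *\<^sub>R (q - p)) ` Q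
      \<subseteq> (closed_segment p q + Q) \<inter> (\<lambda>x. x + (q - p)) ` (closed_segment p q + Q)"
  proof
    fix z assume "z \<in> (\<lambda>x. x + (1/2) *\<^sub>R (q - p)) ` Q"
    then obtain y where y: "y \<in> Q" "z = y + (1/2) *\<^sub>R d" unfolding d_def by auto
    have "(1/2) *\<^sub>R d \<in> closed_segment p q" unfolding seg by (rule exI[of _ 1]) auto
    hence A: "z \<in> closed_segment p q + Q" using y by (metis add.commute set_plus_intro)
    have "- (1/2) *\<^sub>R d \<in> closed_segment p q" unfolding seg by (rule exI[of _ 0]) auto
    have hh: "(1/2) *\<^sub>R d - d = - (1/2) *\<^sub>R d"
    proof -
      have "(1/2) *\<^sub>R d - d = (1/2) *\<^sub>R d - 1 *\<^sub>R d" by simp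
      also have "\<dots> = (1/2 - 1) *\<^sub>R d" by (rule scaleR_diff_left[symmetric])
      also have "(1/2 - 1::real) = - (1/2)" by simp
      finally show ?thesis .
    qed
    have "z - d = y + ((1/2) *\<^sub>R d - d)" using y by simp
    also have "\<dots> = - (1/2) *\<^sub>R d + y" unfolding hh by simp
    finally have zd: "z - d = - (1/2) *\<^sub>R d + y" .
    have "- (1/2) *\<^sub>R d + y \<in> closed_segment p q + Q"
      by (rule set_plus_intro[OF \<open>- (1/2) *\<^sub>R d \<in> closed_segment p q\<close> y(1)])
    hence "z - d \<in> closed_segment p q + Q" by (simp only: zd)
    hence "z \<in> (\<lambda>x. x + (q - p)) ` (closed_segment p q + Q)"
      unfolding d_def by (rule rev_image_eqI) simp
    with A show "z \<in> (closed_segment p q + Q) \<inter> (\<lambda>x. x + (q - p)) ` (closed_segment p q + Q)" by blast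
  qed
  show "(closed_segment p q + Q) \<inter> (\<lambda>x. x + (q - p)) ` (closed_segment p q + Q)
      \<subseteq> (\<lambda>x. x + (1/2) *\<^sub>R (q - p)) ` Q"
  proof
    fix z assume z: "z \<in> (closed_segment p q + Q) \<inter> (\<lambda>x. x + (q - p)) ` (closed_segment p q + Q)"
    then obtain u1 y1 where 1: "u1 \<in> closed_segment p q" "y1 \<in> Q" "z = u1 + y1"
      by (auto simp: set_plus_def)
    from z obtain u2 y2 where 2: "u2 \<in> closed_segment p q" "y2 \<in> Q" "z = u2 + y2 + d"
      by (auto simp: set_plus_def d_def)
    from 1 obtain l1 where l1: "0 \<le> l1" "l1 \<le> 1" "u1 = (l1 - 1/2) *\<^sub>R d" unfolding seg by auto
    from 2 obtain l2 where l2: "0 \<le> l2" "l2 \<le> 1" "u2 = (l2 - 1/2) *\<^sub>R d" unfolding seg by auto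
    define w where "w = z - (1/2) *\<^sub>R d"
    define m where "m = 1 - l1"
    have w1: "w = y1 - m *\<^sub>R d"
    proof -
      have "w = y1 + ((l1 - 1/2) *\<^sub>R d - (1/2) *\<^sub>R d)" unfolding w_def using 1 l1 by (simp add: algebra_simps)
      also have "(l1 - 1/2) *\<^sub>R d - (1/2) *\<^sub>R d = (l1 - 1/2 - 1/2) *\<^sub>R d" by (rule scaleR_diff_left[symmetric])
      also have "(l1 - 1/2 - 1/2) = - m" unfolding m_def by simp
      finally show ?thesis by simp
    qed
    have w2: "w = y2 + l2 *\<^sub>R d"
    proof -
      have "w = y2 + ((l2 - 1/2) *\<^sub>R d + 1 *\<^sub>R d - (1/2) *\<^sub>R d)" unfolding w_def using 2 l2 by (simp add: algebra_simps)
      also have "(l2 - 1/2) *\<^sub>R d + 1 *\<^sub>R d - (1/2) *\<^sub>R d = (l2 - 1/2 + 1 - 1/2) *\<^sub>R d"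
        by (simp only: scaleR_diff_left scaleR_add_left)
      also have "(l2 - 1/2 + 1 - 1/2) = l2" by simp
      finally show ?thesis .
    qed
    have m0: "m \<ge> 0" using l1 unfolding m_def by simp
    have "w \<in> Q"
    proof (cases "m + l2 = 0")
      case True
      then have "l2 = 0" using m0 l2 by simp
      then show ?thesis using w2 2 by simp
    next
      case False
      then have pos: "m + l2 > 0" using m0 l2 by simp
      have "(m + l2) *\<^sub>R w = l2 *\<^sub>R y1 + m *\<^sub>R y2"
      proof -
        have "(m + l2) *\<^sub>R w = l2 *\<^sub>R w + m *\<^sub>R w" by (simp add: algebra_simps)
        also have "\<dots> = l2 *\<^sub>R (y1 - m *\<^sub>R d) + m *\<^sub>R (y2 + l2 *\<^sub>R d)"
          using w1 w2 by metis
        also have "\<dots> = l2 *\<^sub>R y1 + m *\<^sub>R y2" by (simp add: algebra_simps)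
        finally show ?thesis .
      qed
      hence "w = (l2 / (m + l2)) *\<^sub>R y1 + (m / (m + l2)) *\<^sub>R y2"
      proof -
        have "w = inverse (m + l2) *\<^sub>R ((m + l2) *\<^sub>R w)" using pos by simp
        also have "\<dots> = inverse (m + l2) *\<^sub>R (l2 *\<^sub>R y1 + m *\<^sub>R y2)" using \<open>(m + l2) *\<^sub>R w = _\<close> by simp
        also have "\<dots> = (l2 / (m + l2)) *\<^sub>R y1 + (m / (m + l2)) *\<^sub>R y2"
          by (simp add: scaleR_right_distrib divide_inverse mult.commute)
        finally show ?thesis .
      qed
      moreover have "l2 / (m + l2) + m / (m + l2) = 1" using pos by (simp add: add_divide_distrib[symmetric])
      ultimately show ?thesis using cQ 1 2 m0 l2 pos
        by (simp add: convexD)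
    qed
    moreover have "z = w + (1/2) *\<^sub>R (q - p)" unfolding w_def d_def by simp
    ultimately show "z \<in> (\<lambda>x. x + (1/2) *\<^sub>R (q - p)) ` Q" by blast
  qed
qed

theorem corollary4p2:
  fixes SS :: "(real^3) set set" and S0 :: "(real^3) set" and p q :: "real^3"
  assumes "finite SS"
    and "\<And>S. S \<in> SS \<Longrightarrow> centered_segment S"
    and "\<And>S T. S \<in> SS \<Longrightarrow> T \<in> SS \<Longrightarrow> S \<noteq> T \<Longrightarrow> \<not> parallel_segments S T"
    and "aff_dim (minkowski_sum SS) = 3"
    and "S0 \<in> SS"
    and "S0 = closed_segment p q"
  shows "minkowski_sum SS \<inter> (\<lambda>x. x + (q - p)) ` minkowski_sum SS
           = (\<lambda>x. x + (1/2) *\<^sub>R (q - p)) ` minkowski_sum (SS - {S0})"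
proof -
  obtain a where "S0 = closed_segment (-a) a" using assms(2,5) unfolding centered_segment_def by blast
  hence "{p, q} = {-a, a}" using assms(6) by simp
  hence pq: "p = - q" by (auto simp: doubleton_eq_iff)
  have cv: "convex (minkowski_sum (SS - {S0}))"
    unfolding minkowski_sum_def
    by (rule convex_set_sum) (metis Diff_iff assms(2) centered_segment_def convex_closed_segment)
  have "minkowski_sum SS = closed_segment p q + minkowski_sum (SS - {S0})"
    unfolding minkowski_sum_def using assms(1,5,6) by (simp add: sum.remove)
  then show ?thesis using key[OF cv pq] by simp
qed

end
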